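(* Let $d\ge 2$ and $n\ge1$, and let $H$ be a Latin hypercube of dimension $d-1$ and order $n$ (equivalently $H=\mathcal H(P)$ for some $1$-permutation matrix $P\in\Lambda_1(d,n)$). Let $T=\{\alpha_1,\dots,\alpha_n\}$ be a transversal of $H$. Then \[\sum_{i=1}^n \Delta(\alpha_i)\equiv\begin{cases} 0 \pmod n&\text{if } n \text{ is odd or } d \text{ is even,}\\ n/2 \pmod n&\text{otherwise}.\end{cases}\]
   Context: Let $I_n=\{1,\dots,n\}$. A Latin hypercube of dimension $m$ and order $n$ is a function $H:I_n^m\to I_n$ such that along every line (varying one coordinate while fixing the others) each symbol of $I_n$ appears exactly once. A $1$-permutation matrix $P\in\Lambda_1(d,n)$ is a $(0,1)$-valued function on $I_n^d$ with exactly one $1$ in each line; it corresponds to the Latin hypercube $\mathcal H(P)$ of dimension $d-1$ with $\mathcal H(P)(i_1,\dots,i_{d-1})=i_d$ iff $P(i_1,\dots,i_d)=1$. A transversal of a Latin hypercube $H$ of dimension $m$ and order $n$ is a selection of $n$ cells of $H$, any two of which differ in every coordinate and contain different symbols. For a cell $\alpha$ at position $(i_1,\dots,i_m)$ of $H$ containing symbol $e=H(i_1,\dots,i_m)$, the Delta function is $\Delta(\alpha)\equiv e-i_1-\cdots-i_m \pmod n$. *)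

theory Defs
  imports Main "HOL-Number_Theory.Cong"
begin

definition cells :: "nat \<Rightarrow> nat \<Rightarrow> nat list set" where
  "cells n m = {x. length x = m \<and> set x \<subseteq> {1..n}}"

definition latin_hypercube :: "nat \<Rightarrow> nat \<Rightarrow> (nat list \<Rightarrow> nat) \<Rightarrow> bool" where
  "latin_hypercube m n H \<longleftrightarrow>
     (\<forall>x\<in>cells n m. H x \<in> {1..n}) \<and>
     (\<forall>x\<in>cells n m. \<forall>k<m. bij_betw (\<lambda>j. H (x[k := j])) {1..n} {1..n})"

definition transversal :: "nat \<Rightarrow> nat \<Rightarrow> (nat list \<Rightarrow> nat) \<Rightarrow> nat list set \<Rightarrow> bool" where
  "transversal m n H T \<longleftrightarrow>
     T \<subseteq> cells n m \<and> card T = n \<and>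
     (\<forall>a\<in>T. \<forall>b\<in>T. a \<noteq> b \<longrightarrow> (\<forall>k<m. a ! k \<noteq> b ! k) \<and> H a \<noteq> H b)"

definition Delta :: "nat \<Rightarrow> (nat list \<Rightarrow> nat) \<Rightarrow> nat list \<Rightarrow> int" where
  "Delta n H x = (int (H x) - (\<Sum>k<length x. int (x ! k))) mod int n"

end

theory Submission
  imports Defs
begin

lemma sum_bij_img:
  fixes f :: "nat list \<Rightarrow> nat" and T :: "nat list set"
  assumes "finite T" "card T = n" "inj_on f T" "f ` T \<subseteq> {1..n}"
  shows "(\<Sum>a\<in>T. int (f a)) = int (\<Sum>{1..n})"
proof -
  have "card (f ` T) = n" using assms card_image by metis
  hence img: "f ` T = {1..n}" using assms(4) by (simp add: card_subset_eq)
  have "(\<Sum>a\<in>T. int (f a)) = int (\<Sum>a\<in>T. f a)" by simp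
  also have "(\<Sum>a\<in>T. f a) = (\<Sum>x\<in>f ` T. x)" using sum.reindex[OF assms(3), of id] by simp
  finally show ?thesis using img by simp
qed

lemma arith_final:
  fixes m n :: nat and S :: int
  assumes "2 * S = int n * (int n + 1)" "n \<ge> 1"
  shows "[(1 - int m) * S = (if odd n \<or> even (m+1) then 0 else int n div 2)] (mod int n)"
proof (cases "odd n")
  case True
  then obtain k where k: "n = 2*k+1" by (metis oddE)
  have "2 * S = 2 * (int n * (int k + 1))" using assms(1) k by (simp add: algebra_simps)
  hence "S = int n * (int k + 1)" by simp
  then show ?thesis using True by (simp add: cong_0_iff)
next
  case False
  then obtain k where k: "n = 2*k" by blast
  have "2 * S = 2 * (int k * (int n + 1))" using assms(1) k by (simp add: algebra_simps)
  hence S: "S = int k * (int n + 1)" by simp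
  show ?thesis
  proof (cases "even (m+1)")
    case True
    then obtain j where j: "m + 1 = 2*j" by blast
    have jm: "int m = 2 * int j - 1" using j by linarith
    have jm2: "1 - int m = 2 * (1 - int j)" using jm by simp
    have "(1 - int m) * S = int n * (- (int j - 1) * (int n + 1))"
      unfolding jm2 S using k by (simp add: algebra_simps)
    then show ?thesis using True by (simp add: cong_0_iff)
  next
    case F2: False
    then have "even m" by simp
    then obtain j where j: "m = 2*j" by blast
    have "(1 - int m) * S - int n div 2 = int n * (int k - int j * (int n + 1))"
      using S k j by (simp add: algebra_simps)
    hence "int n dvd (1 - int m) * S - int n div 2" by simp
    then show ?thesis using F2 False
      by (simp add: cong_iff_dvd_diff)
  qed
qed

theorem lemma2p4:
  fixes d n :: nat and H :: "nat list \<Rightarrow> nat" and T :: "nat list set"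
  assumes "d \<ge> 2" and "n \<ge> 1"
    and "latin_hypercube (d - 1) n H"
    and "transversal (d - 1) n H T"
  shows "[(\<Sum>\<alpha>\<in>T. Delta n H \<alpha>) =
          (if odd n \<or> even d then 0 else int n div 2)] (mod int n)"
proof -
  define m where "m = d - 1"
  have d: "d = m + 1" using assms(1) m_def by simp
  have Tc: "T \<subseteq> cells n m" and cT: "card T = n"
    and dist: "\<forall>a\<in>T. \<forall>b\<in>T. a \<noteq> b \<longrightarrow> (\<forall>k<m. a ! k \<noteq> b ! k) \<and> H a \<noteq> H b"
    using assms(4) unfolding transversal_def m_def by auto
  have fin: "finite T" using cT assms(2) card.infinite by fastforce
  have Hin: "\<forall>x\<in>cells n m. H x \<in> {1..n}" using assms(3) unfolding latin_hypercube_def m_def by auto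
  define S where "S = int (\<Sum>{1..n})"
  have SH: "(\<Sum>a\<in>T. int (H a)) = S" unfolding S_def
    apply (rule sum_bij_img[OF fin cT])
    using dist Hin Tc by (auto simp: inj_on_def)
  have Sk: "(\<Sum>a\<in>T. int (a ! k)) = S" if "k < m" for k unfolding S_def
    apply (rule sum_bij_img[OF fin cT])
    using dist that apply (force simp: inj_on_def)
  proof
    fix y assume "y \<in> (\<lambda>a. a ! k) ` T"
    then obtain a where a: "a \<in> T" "y = a ! k" by blast
    have "length a = m" "set a \<subseteq> {1..n}" using Tc a(1) by (auto simp: cells_def)
    thus "y \<in> {1..n}" using a(2) that nth_mem[of k a] by blast
  qed
  have len: "\<And>a. a \<in> T \<Longrightarrow> length a = m" using Tc by (auto simp: cells_def)
  have "(\<Sum>\<alpha>\<in>T. int (H \<alpha>) - (\<Sum>k<length \<alpha>. int (\<alpha> ! k)))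
      = (\<Sum>\<alpha>\<in>T. int (H \<alpha>) - (\<Sum>k<m. int (\<alpha> ! k)))"
    using len by (intro sum.cong) auto
  also have "\<dots> = S - (\<Sum>k<m. \<Sum>\<alpha>\<in>T. int (\<alpha> ! k))"
    using SH by (simp add: sum_subtractf sum.swap[of _ T])
  also have "\<dots> = S - int m * S" using Sk by simp
  finally have tot: "(\<Sum>\<alpha>\<in>T. int (H \<alpha>) - (\<Sum>k<length \<alpha>. int (\<alpha> ! k))) = (1 - int m) * S"
    by (simp add: algebra_simps)
  have "[(\<Sum>\<alpha>\<in>T. Delta n H \<alpha>) = (\<Sum>\<alpha>\<in>T. int (H \<alpha>) - (\<Sum>k<length \<alpha>. int (\<alpha> ! k)))] (mod int n)"
    unfolding Delta_def by (rule cong_sum) (simp add: cong_def)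
  moreover have "2 * S = int n * (int n + 1)"
  proof -
    have "2 * (\<Sum>{1..n}) = n * (n + 1)" using Sum_Icc_nat[of 1 n] assms(2) by simp
    thus ?thesis unfolding S_def by (metis of_nat_1 of_nat_add of_nat_mult of_nat_numeral)
  qed
  ultimately show ?thesis using tot arith_final[of S n m] assms(2) d
    by (metis cong_trans)
qed

end
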